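(* Fix $n\in\mathbb{N}$ and $s\in(0,1)$. Suppose that for every $i>2$ the jump kernels $j_i^{(n)}$ satisfy $\lambda_i|x-y|^{-1-2s}\le j_i^{(n)}(x,y)\le\Lambda_i|x-y|^{-1-2s}$ for all $n\ge0$ and all wires $\{x,y\}$, with constants $0<\lambda_i\le\Lambda_i<\infty$ satisfying $\lim_{i\to\infty}\lambda_i/i^2=1$ and $\lim_{i\to\infty}\Lambda_i/i^2=1$. Then $$\lim_{i\to\infty}\sum_{x\in V_{i-}^{(n)}}\sum_{y\in V_{i+}^{(n)}}j_i^{(n)}(x,y)\mu_i^{(n)}(x)\mu_i^{(n)}(y)=1.$$
   Context: Index graph: vertices $\mathbb{N}$; vertex $i$ has edges $e_{i,2i-2}$ to $2i-2$ (only if $i\ge2$), $e_{i,2i-1},e'_{i,2i-1}$ to $2i-1$, $e_{i,2i}$ to $2i$, weights $r_e>0$ with $r_{e_{i,2i-1}}=r_{e'_{i,2i-1}}$. For $e$ from $i$ to $j$, $\phi_e(x)=\frac{j}{2i}x+s_e$, $s_e=0$ for $e\in\{e_{i,2i-1},e_{i,2i}\}$, $s_e=\frac1{2i}$ for $e\in\{e_{i,2i-2},e'_{i,2i-1}\}$. $E_i^{(n)}$: paths $\sigma=e_1\cdots e_n$ of length $n$ from $i$; $\phi_\sigma=\phi_{e_1}\circ\cdots\circ\phi_{e_n}$, $\delta_\sigma=r_{e_1}\cdots r_{e_n}$. For $i>1$: $V_{i-}^{(n)}=\{k/(i2^n)\}_{k=0}^{2^n-1}$, $V_{i+}^{(n)}=\{1-k/(i2^n)\}_{k=0}^{2^n-1}$;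 the wires $\{\phi_\sigma(0),\phi_\sigma(1)\}$, $\sigma\in E_i^{(n)}$, are all pairs $\{x,y\}$ with $x\in V_{i-}^{(n)},y\in V_{i+}^{(n)}$, each with a unique path $\sigma^{(n)}_{x,y}$. $\mu_i^{(n)}(x)=\frac1{i2^n}$ for $x\in V_{i-}^{(n)}\cup V_{i+}^{(n)}$. Kernel $j_i^{(n)}(x,y)=(\delta_{\sigma^{(n)}_{x,y}}\mu_i^{(n)}(x)\mu_i^{(n)}(y))^{-1}$ on wires, $0$ otherwise. *)

theory Defs
  imports Complex_Main
begin

text \<open>Edges of the index graph: an edge is a pair (i, label) where i is the source
vertex. Labels: Lft = e_{i,2i-2}, Mid = e_{i,2i-1}, Mid' = e'_{i,2i-1}, Rgt = e_{i,2i}.\<close>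

datatype elab = Lft | Mid | Mid' | Rgt

type_synonym edge = "nat \<times> elab"

definition valid_edge :: "edge \<Rightarrow> bool" where
  "valid_edge e \<longleftrightarrow> fst e \<ge> 1 \<and> (snd e = Lft \<longrightarrow> fst e \<ge> 2)"

fun tgt :: "edge \<Rightarrow> nat" where
  "tgt (i, Lft) = 2*i - 2"
| "tgt (i, Mid) = 2*i - 1"
| "tgt (i, Mid') = 2*i - 1"
| "tgt (i, Rgt) = 2*i"

fun shift :: "edge \<Rightarrow> real" where
  "shift (i, Lft) = 1 / (2 * real i)"
| "shift (i, Mid) = 0"
| "shift (i, Mid') = 1 / (2 * real i)"
| "shift (i, Rgt) = 0"

definition phi_edge :: "edge \<Rightarrow> real \<Rightarrow> real" where
  "phi_edge e x = real (tgt e) / (2 * real (fst e)) * x + shift e"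

fun paths :: "nat \<Rightarrow> nat \<Rightarrow> edge list set" where
  "paths i 0 = {[]}"
| "paths i (Suc n) = {e # \<sigma> | e \<sigma>. fst e = i \<and> valid_edge e \<and> \<sigma> \<in> paths (tgt e) n}"

definition phi_path :: "edge list \<Rightarrow> real \<Rightarrow> real" where
  "phi_path \<sigma> = foldr (\<lambda>e f. phi_edge e \<circ> f) \<sigma> id"

definition delta :: "(edge \<Rightarrow> real) \<Rightarrow> edge list \<Rightarrow> real" where
  "delta r \<sigma> = prod_list (map r \<sigma>)"

definition Vminus :: "nat \<Rightarrow> nat \<Rightarrow> real set" where
  "Vminus i n = {real k / (real i * 2 ^ n) | k. k < 2 ^ n}"

definition Vplus :: "nat \<Rightarrow> nat \<Rightarrow> real set" where
  "Vplus i n = {1 - real k / (real i * 2 ^ n) | k. k < 2 ^ n}"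

definition mu :: "nat \<Rightarrow> nat \<Rightarrow> real \<Rightarrow> real" where
  "mu i n x = (if x \<in> Vminus i n \<union> Vplus i n then 1 / (real i * 2 ^ n) else 0)"

definition is_wire_path :: "nat \<Rightarrow> nat \<Rightarrow> real \<Rightarrow> real \<Rightarrow> edge list \<Rightarrow> bool" where
  "is_wire_path i n x y \<sigma> \<longleftrightarrow> \<sigma> \<in> paths i n \<and> {phi_path \<sigma> 0, phi_path \<sigma> 1} = {x, y}"

definition jkernel :: "(edge \<Rightarrow> real) \<Rightarrow> nat \<Rightarrow> nat \<Rightarrow> real \<Rightarrow> real \<Rightarrow> real" where
  "jkernel r i n x y =
     (if \<exists>\<sigma>. is_wire_path i n x y \<sigma>
      then 1 / (delta r (THE \<sigma>. is_wire_path i n x y \<sigma>) * mu i n x * mu i n y)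
      else 0)"

end

theory Submission imports Defs begin

lemma phi_cons: "phi_path (e#\<sigma>) x = phi_edge e (phi_path \<sigma> x)"
  by (simp add: phi_path_def)

lemma paths_cons: "fst e = i \<Longrightarrow> valid_edge e \<Longrightarrow> \<tau> \<in> paths (tgt e) n \<Longrightarrow> e # \<tau> \<in> paths i (Suc n)"
  by (cases e) auto

lemma wires_exist:
  "2 \<le> i \<Longrightarrow> k < 2^n \<Longrightarrow> l < 2^n \<Longrightarrow> \<exists>\<sigma>\<in>paths i n.
     phi_path \<sigma> 0 = real k / (real i * 2^n) \<and> phi_path \<sigma> 1 = 1 - real l / (real i * 2^n)"
proof (induction n arbitrary: i k l)
  case 0
  then show ?case by (auto simp: phi_path_def)
next
  case (Suc n)
  have i1: "real i \<ge> 2" using Suc.prems by simp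
  show ?case
  proof (cases "k < 2^n")
    case k: True
    show ?thesis
    proof (cases "l < 2^n")
      case l: True
      obtain \<tau> where t: "\<tau> \<in> paths (2*i) n" "phi_path \<tau> 0 = real k / (real (2*i) * 2^n)"
        "phi_path \<tau> 1 = 1 - real l / (real (2*i) * 2^n)"
        using Suc.IH[of "2*i" k l] Suc.prems k l by fastforce
      have "(i,Rgt) # \<tau> \<in> paths i (Suc n)" using t Suc.prems by (intro paths_cons) (auto simp: valid_edge_def)
      moreover have "phi_path ((i,Rgt) # \<tau>) 0 = real k / (real i * 2^Suc n)"
        "phi_path ((i,Rgt) # \<tau>) 1 = 1 - real l / (real i * 2^Suc n)"
        unfolding phi_cons t(2) t(3) phi_edge_def using i1 by (simp_all add:  field_simps)
      ultimately show ?thesis by blast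
    next
      case l: False
      obtain \<tau> where t: "\<tau> \<in> paths (2*i-1) n" "phi_path \<tau> 0 = real k / (real (2*i-1) * 2^n)"
        "phi_path \<tau> 1 = 1 - real (l - 2^n) / (real (2*i-1) * 2^n)"
        using Suc.IH[of "2*i-1" k "l - 2^n"] Suc.prems k l by fastforce
      have r: "real (2*i-1) = 2 * real i - 1" using Suc.prems by (simp add: of_nat_diff)
      have rl: "real (l - 2^n) = real l - 2^n" using l by (simp add: of_nat_diff)
      have "(i,Mid) # \<tau> \<in> paths i (Suc n)" using t Suc.prems by (intro paths_cons) (auto simp: valid_edge_def)
      moreover have "phi_path ((i,Mid) # \<tau>) 0 = real k / (real i * 2^Suc n)"
        "phi_path ((i,Mid) # \<tau>) 1 = 1 - real l / (real i * 2^Suc n)"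
        unfolding phi_cons t(2) t(3) phi_edge_def using i1 by (simp_all add: r rl  field_simps)
      ultimately show ?thesis by blast
    qed
  next
    case k: False
    have rk: "real (k - 2^n) = real k - 2^n" using k by (simp add: of_nat_diff)
    show ?thesis
    proof (cases "l < 2^n")
      case l: True
      obtain \<tau> where t: "\<tau> \<in> paths (2*i-1) n" "phi_path \<tau> 0 = real (k - 2^n) / (real (2*i-1) * 2^n)"
        "phi_path \<tau> 1 = 1 - real l / (real (2*i-1) * 2^n)"
        using Suc.IH[of "2*i-1" "k - 2^n" l] Suc.prems k l by fastforce
      have r: "real (2*i-1) = 2 * real i - 1" using Suc.prems by (simp add: of_nat_diff)
      have "(i,Mid') # \<tau> \<in> paths i (Suc n)" using t Suc.prems by (intro paths_cons) (auto simp: valid_edge_def)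
      moreover have "phi_path ((i,Mid') # \<tau>) 0 = real k / (real i * 2^Suc n)"
        "phi_path ((i,Mid') # \<tau>) 1 = 1 - real l / (real i * 2^Suc n)"
        unfolding phi_cons t(2) t(3) phi_edge_def using i1 by (simp_all add: r rk  field_simps)
      ultimately show ?thesis by blast
    next
      case l: False
      obtain \<tau> where t: "\<tau> \<in> paths (2*i-2) n" "phi_path \<tau> 0 = real (k - 2^n) / (real (2*i-2) * 2^n)"
        "phi_path \<tau> 1 = 1 - real (l - 2^n) / (real (2*i-2) * 2^n)"
        using Suc.IH[of "2*i-2" "k - 2^n" "l - 2^n"] Suc.prems k l by fastforce
      have r: "real (2*i-2) = 2 * real i - 2" using Suc.prems by (simp add: of_nat_diff)
      have rl: "real (l - 2^n) = real l - 2^n" using l by (simp add: of_nat_diff)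
      have "(i,Lft) # \<tau> \<in> paths i (Suc n)" using t Suc.prems by (intro paths_cons) (auto simp: valid_edge_def)
      moreover have "phi_path ((i,Lft) # \<tau>) 0 = real k / (real i * 2^Suc n)"
        "phi_path ((i,Lft) # \<tau>) 1 = 1 - real l / (real i * 2^Suc n)"
        unfolding phi_cons t(2) t(3) phi_edge_def using i1 by (simp_all add: r rk rl  field_simps)
      ultimately show ?thesis by blast
    qed
  qed
qed

lemma term_bounds:
  fixes r :: "edge \<Rightarrow> real" and s :: real and lam Lam :: "nat \<Rightarrow> real"
  assumes i: "i > 2" and s: "0 < s"
    and lp: "0 < lam i" and lL: "lam i \<le> Lam i"
    and bounds: "\<And>\<sigma>. \<sigma> \<in> paths i n \<Longrightarrow>
        lam i * \<bar>phi_path \<sigma> 0 - phi_path \<sigma> 1\<bar> powr (-1 - 2*s)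
          \<le> jkernel r i n (phi_path \<sigma> 0) (phi_path \<sigma> 1)
      \<and> jkernel r i n (phi_path \<sigma> 0) (phi_path \<sigma> 1)
          \<le> Lam i * \<bar>phi_path \<sigma> 0 - phi_path \<sigma> 1\<bar> powr (-1 - 2*s)"
    and x: "x \<in> Vminus i n" and y: "y \<in> Vplus i n"
  shows "lam i * (1 / (real i * 2^n))^2 \<le> jkernel r i n x y * mu i n x * mu i n y
    \<and> jkernel r i n x y * mu i n x * mu i n y
       \<le> Lam i * (1 / (real i * 2^n))^2 * (1 - 2 / real i) powr (-1 - 2*s)"
proof -
  define c where "c = 1 / (real i * 2^n)"
  have c0: "c > 0" using i by (simp add: c_def)
  obtain k where k: "k < 2^n" "x = real k / (real i * 2^n)" using x by (auto simp: Vminus_def)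
  obtain l where l: "l < 2^n" "y = 1 - real l / (real i * 2^n)" using y by (auto simp: Vplus_def)
  obtain \<sigma> where sg: "\<sigma> \<in> paths i n" "phi_path \<sigma> 0 = x" "phi_path \<sigma> 1 = y"
    using wires_exist[of i k n l] i k l by auto
  have mx: "mu i n x = c" using x by (simp add: mu_def c_def)
  have my: "mu i n y = c" using y by (simp add: mu_def c_def)
  have xc: "x = real k * c" "y = 1 - real l * c" using k l by (simp_all add: c_def)
  have kc: "real k * c < 1 / real i" "real l * c < 1 / real i"
  proof -
    have "real k < 2^n" using k(1)
      by (metis of_nat_less_iff of_nat_numeral of_nat_power)
    then show "real k * c < 1 / real i" using i by (simp add: c_def field_simps)
    have "real l < 2^n" using l(1)
      by (metis of_nat_less_iff of_nat_numeral of_nat_power)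
    then show "real l * c < 1 / real i" using i by (simp add: c_def field_simps)
  qed
  have nn: "real k * c \<ge> 0" "real l * c \<ge> 0" using c0 by simp_all
  have ii: "1 / real i < 1/2" using i by (simp add: field_simps)
  define d where "d = \<bar>x - y\<bar>"
  have d: "d = 1 - (real k * c + real l * c)" unfolding d_def xc using kc nn ii by auto
  have d1: "d \<le> 1" and d2: "1 - 2 / real i \<le> d" using d kc nn by auto
  have pos: "0 < 1 - 2 / real i" using i by (simp add: field_simps)
  have p1: "1 \<le> d powr (-1 - 2*s)"
    using powr_mono2'[of "-1-2*s" d 1] d1 d2 pos s by simp
  have p2: "d powr (-1 - 2*s) \<le> (1 - 2 / real i) powr (-1 - 2*s)"
    using powr_mono2'[of "-1-2*s" "1 - 2 / real i" d] d2 pos s by simp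
  have B: "lam i * d powr (-1-2*s) \<le> jkernel r i n x y" "jkernel r i n x y \<le> Lam i * d powr (-1-2*s)"
    using bounds[OF sg(1)] sg unfolding d_def by auto
  have c2: "c^2 > 0" using c0 by simp
  have "lam i * c^2 \<le> lam i * d powr (-1-2*s) * c^2"
    using p1 lp c2 by (simp add: mult_left_mono)
  also have "\<dots> \<le> jkernel r i n x y * c^2" using B(1) c2 by (simp add: mult_right_mono)
  finally have L: "lam i * c^2 \<le> jkernel r i n x y * mu i n x * mu i n y"
    by (simp add: mx my power2_eq_square mult.assoc)
  have "jkernel r i n x y * c^2 \<le> Lam i * d powr (-1-2*s) * c^2" using B(2) c2 by (simp add: mult_right_mono)
  also have "\<dots> \<le> Lam i * (1 - 2 / real i) powr (-1 - 2*s) * c^2"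
    using p2 lp lL c2 by (intro mult_right_mono mult_left_mono) auto
  finally have U: "jkernel r i n x y * mu i n x * mu i n y \<le> Lam i * c^2 * (1 - 2 / real i) powr (-1 - 2*s)"
    by (simp add: mx my power2_eq_square mult_ac)
  show ?thesis using L U by (simp add: c_def)
qed

lemma card_V: "i > 0 \<Longrightarrow> card (Vminus i n) = 2^n \<and> card (Vplus i n) = 2^n \<and> finite (Vminus i n) \<and> finite (Vplus i n)"
proof -
  assume i: "i > 0"
  have a: "Vminus i n = (\<lambda>k. real k / (real i * 2^n)) ` {..<2^n}" by (auto simp: Vminus_def)
  have b: "Vplus i n = (\<lambda>k. 1 - real k / (real i * 2^n)) ` {..<2^n}" by (auto simp: Vplus_def)
  have ia: "inj_on (\<lambda>k. real k / (real i * 2^n)) {..<2^n}" using i by (auto simp: inj_on_def)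
  have ib: "inj_on (\<lambda>k. 1 - real k / (real i * 2^n)) {..<2^n}" using i by (auto simp: inj_on_def)
  show ?thesis unfolding a b using card_image[OF ia] card_image[OF ib] by auto
qed

theorem lemma6p2:
  fixes r :: "edge \<Rightarrow> real" and n :: nat and s :: real
    and lam Lam :: "nat \<Rightarrow> real"
  assumes r_pos: "\<And>e. valid_edge e \<Longrightarrow> r e > 0"
    and r_sym: "\<And>i. r (i, Mid) = r (i, Mid')"
    and s: "0 < s" "s < 1"
    and lam_pos: "\<And>i. i > 2 \<Longrightarrow> 0 < lam i"
    and lam_Lam: "\<And>i. i > 2 \<Longrightarrow> lam i \<le> Lam i"
    and bounds: "\<And>i m \<sigma>. i > 2 \<Longrightarrow> \<sigma> \<in> paths i m \<Longrightarrow>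
        lam i * \<bar>phi_path \<sigma> 0 - phi_path \<sigma> 1\<bar> powr (-1 - 2*s)
          \<le> jkernel r i m (phi_path \<sigma> 0) (phi_path \<sigma> 1)
      \<and> jkernel r i m (phi_path \<sigma> 0) (phi_path \<sigma> 1)
          \<le> Lam i * \<bar>phi_path \<sigma> 0 - phi_path \<sigma> 1\<bar> powr (-1 - 2*s)"
    and lam_lim: "(\<lambda>i. lam i / real i ^ 2) \<longlonglongrightarrow> 1"
    and Lam_lim: "(\<lambda>i. Lam i / real i ^ 2) \<longlonglongrightarrow> 1"
  shows "(\<lambda>i. \<Sum>x\<in>Vminus i n. \<Sum>y\<in>Vplus i n.
            jkernel r i n x y * mu i n x * mu i n y) \<longlonglongrightarrow> 1"
proof (rule tendsto_sandwich)
  let ?S = "\<lambda>i. \<Sum>x\<in>Vminus i n. \<Sum>y\<in>Vplus i n. jkernel r i n x y * mu i n x * mu i n y"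
  have key: "lam i / real i ^ 2 \<le> ?S i \<and> ?S i \<le> Lam i / real i ^ 2 * (1 - 2 / real i) powr (-1 - 2*s)"
    if i: "i > 2" for i
  proof -
    have cv: "card (Vminus i n) = 2^n" "card (Vplus i n) = 2^n" using card_V[of i n] i by auto
    have tb: "\<And>x y. x \<in> Vminus i n \<Longrightarrow> y \<in> Vplus i n \<Longrightarrow>
       lam i * (1 / (real i * 2^n))^2 \<le> jkernel r i n x y * mu i n x * mu i n y
    \<and> jkernel r i n x y * mu i n x * mu i n y
       \<le> Lam i * (1 / (real i * 2^n))^2 * (1 - 2 / real i) powr (-1 - 2*s)"
      by (rule term_bounds[of i s lam Lam n r, OF i s(1) lam_pos[OF i] lam_Lam[OF i]]) (use bounds[OF i] in auto)
    have "(\<Sum>x\<in>Vminus i n. \<Sum>y\<in>Vplus i n. lam i * (1 / (real i * 2^n))^2) \<le> ?S i"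
      using tb by (intro sum_mono) auto
    moreover have "?S i \<le> (\<Sum>x\<in>Vminus i n. \<Sum>y\<in>Vplus i n. Lam i * (1 / (real i * 2^n))^2 * (1 - 2 / real i) powr (-1 - 2*s))"
      using tb by (intro sum_mono) auto
    moreover have "(2::real)^n * 2^n * (1 / (real i * 2^n))^2 = 1 / real i ^ 2"
      by (simp add: field_simps power2_eq_square)
    ultimately show ?thesis using cv
      by (simp add: power2_eq_square field_simps)
  qed
  show "\<forall>\<^sub>F i in sequentially. lam i / real i ^ 2 \<le> ?S i"
    by (rule eventually_mono[OF eventually_gt_at_top[of 2]]) (use key in blast)
  show "\<forall>\<^sub>F i in sequentially. ?S i \<le> Lam i / real i ^ 2 * (1 - 2 / real i) powr (-1 - 2*s)"
    by (rule eventually_mono[OF eventually_gt_at_top[of 2]]) (use key in blast)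
  show "(\<lambda>i. lam i / real i ^ 2) \<longlonglongrightarrow> 1" by (rule lam_lim)
  have "(\<lambda>i. 2 / real i) \<longlonglongrightarrow> 0" by (rule lim_const_over_n)
  then have "(\<lambda>i. 1 - 2 / real i) \<longlonglongrightarrow> 1 - 0" by (intro tendsto_diff) auto
  then have "(\<lambda>i. (1 - 2 / real i) powr (-1 - 2*s)) \<longlonglongrightarrow> 1 powr (-1 - 2*s)"
    by (intro tendsto_powr) auto
  then have "(\<lambda>i. Lam i / real i ^ 2 * (1 - 2 / real i) powr (-1 - 2*s)) \<longlonglongrightarrow> 1 * 1"
    using Lam_lim by (intro tendsto_mult) auto
  then show "(\<lambda>i. Lam i / real i ^ 2 * (1 - 2 / real i) powr (-1 - 2*s)) \<longlonglongrightarrow> 1" by simp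
qed

end
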